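(* Let $\omega\in\widehat{\mathcal D}$ and $\alpha>0$, and set $\mu=\omega\,\widehat\omega^{\alpha-1}$. Then $\mu\in\widehat{\mathcal D}$ and $\mu_x\asymp\omega_x^\alpha$ for all $x\ge1$.
   Context: A radial weight is a nonnegative $\omega\in L^1([0,1))$, extended by $\omega(z)=\omega(|z|)$; $\widehat\omega(r)=\int_r^1\omega(s)ds>0$ for all $r\in[0,1)$. $\omega\in\widehat{\mathcal D}$ means $\widehat\omega(r)\le C\widehat\omega(\frac{1+r}2)$ for some $C>0$ and all $0\le r<1$. Moments: $\omega_x=\int_0^1r^x\omega(r)dr$. $A\asymp B$ means comparability with constants independent of $x$. *)

theory Defs
  imports "HOL-Analysis.Analysis"
begin

text \<open>Radial weights are represented by their profile on [0,1).\<close>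

definition omega_hat :: "(real \<Rightarrow> real) \<Rightarrow> real \<Rightarrow> real" where
  "omega_hat \<omega> r = (LBINT s:{r..<1}. \<omega> s)"

definition radial_weight :: "(real \<Rightarrow> real) \<Rightarrow> bool" where
  "radial_weight \<omega> \<longleftrightarrow>
     (\<forall>r\<in>{0..<1}. 0 \<le> \<omega> r) \<and>
     set_integrable lborel {0..<1} \<omega> \<and>
     (\<forall>r\<in>{0..<1}. omega_hat \<omega> r > 0)"

definition D_hat :: "(real \<Rightarrow> real) \<Rightarrow> bool" where
  "D_hat \<omega> \<longleftrightarrow> radial_weight \<omega> \<and>
     (\<exists>C>0. \<forall>r\<in>{0..<1}. omega_hat \<omega> r \<le> C * omega_hat \<omega> ((1 + r) / 2))"

definition moment :: "(real \<Rightarrow> real) \<Rightarrow> real \<Rightarrow> real" where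
  "moment \<omega> x = (LBINT s:{0..<1}. s powr x * \<omega> s)"

end

theory Submission
  imports Defs
begin


definition w0 :: "(real \<Rightarrow> real) \<Rightarrow> real \<Rightarrow> real" where
  "w0 \<nu> s = indicator {0..<1} s * \<nu> s"

lemma rw_nonneg: "radial_weight \<nu> \<Longrightarrow> 0 \<le> w0 \<nu> s"
  by (auto simp: radial_weight_def w0_def indicator_def)

lemma rw_w0_1: "w0 \<nu> 1 = 0"
  by (simp add: w0_def)

lemma rw_integrable: "radial_weight \<nu> \<Longrightarrow> integrable lborel (w0 \<nu>)"
  unfolding radial_weight_def set_integrable_def w0_def by simp

lemma rw_meas: "radial_weight \<nu> \<Longrightarrow> w0 \<nu> \<in> borel_measurable borel"
  using borel_measurable_integrable[OF rw_integrable[of \<nu>]] by simp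

lemma rw_int_on: assumes "radial_weight \<nu>" shows "w0 \<nu> integrable_on {a..b}"
proof -
  have "set_integrable lborel {a..b} (w0 \<nu>)"
    unfolding set_integrable_def using rw_integrable[OF assms]
    by (intro integrable_mult_indicator) auto
  then show ?thesis by (rule set_borel_integral_eq_integral(1))
qed

lemma rw_hat: assumes "radial_weight \<nu>" "0 \<le> r"
  shows "omega_hat \<nu> r = integral {r..1} (w0 \<nu>)"
proof -
  have si: "set_integrable lborel {r..1} (w0 \<nu>)"
    unfolding set_integrable_def using rw_integrable[OF assms(1)]
    by (intro integrable_mult_indicator) auto
  have "omega_hat \<nu> r = (LBINT s:{r..1}. w0 \<nu> s)"
    unfolding omega_hat_def set_lebesgue_integral_def
    by (rule Bochner_Integration.integral_cong) (use assms(2) in \<open>auto simp: w0_def indicator_def\<close>)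
  also have "\<dots> = integral {r..1} (w0 \<nu>)"
    by (rule set_borel_integral_eq_integral(2)[OF si])
  finally show ?thesis .
qed



lemma summ_aux: fixes C :: real assumes "C \<ge> 1" shows "summable (\<lambda>k::nat. exp (-(2^k)) * C^(k+1))"
proof -
  obtain N::nat where N: "ln (2*C) \<le> real N" using real_arch_simple by blast
  show ?thesis
proof (rule summable_ratio_test[where c="1/2" and N=N])
  show "norm (exp (-(2^Suc n)) * C^(Suc n+1)) \<le> 1/2 * norm (exp (-(2^n)) * C^(n+1))" if "n \<ge> N" for n
  proof -
    have "real n \<le> 2^n"
    proof (induction n)
      case (Suc n)
      have "1 \<le> (2::real)^n" by simp
      then show ?case using Suc by (simp only: of_nat_Suc power_Suc)
    qed simp
    moreover have "real N \<le> real n" using that by simp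
    ultimately have "ln (2*C) \<le> 2^n" using N by linarith
    then have "exp (ln (2*C)) \<le> exp (2^n)" by simp
    then have e: "2*C \<le> exp (2^n)" using assms by simp
    have "exp (-(2^Suc n)) * C^(Suc n+1) = (C * exp (-(2^n))) * (exp (-(2^n)) * C^(n+1))"
      by (simp add: exp_minus field_simps exp_add[symmetric])
    also have "C * exp (-(2^n)) \<le> 1/2" using e by (simp add: exp_minus field_simps)
    then have "(C * exp (-(2^n))) * (exp (-(2^n)) * C^(n+1)) \<le> 1/2 * (exp (-(2^n)) * C^(n+1))"
      using assms by (intro mult_right_mono) auto
    finally show ?thesis using assms by simp
  qed
qed simp
qed



definition hh :: "(real \<Rightarrow> real) \<Rightarrow> real \<Rightarrow> real" where
  "hh \<nu> r = integral {r..1} (w0 \<nu>)"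

lemma hh_nonneg: "radial_weight \<nu> \<Longrightarrow> 0 \<le> hh \<nu> r"
  unfolding hh_def by (intro integral_nonneg rw_int_on) (auto intro: rw_nonneg)

lemma hh_one: "hh \<nu> 1 = 0"
  unfolding hh_def by simp

lemma hh_combine: assumes "radial_weight \<nu>" "a \<le> b" "b \<le> 1"
  shows "hh \<nu> a = integral {a..b} (w0 \<nu>) + hh \<nu> b"
  unfolding hh_def using Henstock_Kurzweil_Integration.integral_combine[OF assms(2,3) rw_int_on[OF assms(1)]] by simp

lemma hh_mono: assumes "radial_weight \<nu>" "a \<le> b" "b \<le> 1"
  shows "hh \<nu> b \<le> hh \<nu> a"
proof -
  have "0 \<le> integral {a..b} (w0 \<nu>)"
    by (intro integral_nonneg rw_int_on assms) (auto intro: rw_nonneg assms)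
  then show ?thesis using hh_combine[OF assms] by simp
qed

lemma hh_cont: assumes "radial_weight \<nu>" shows "continuous_on {0..1} (hh \<nu>)"
proof -
  have c: "continuous_on {0..1} (\<lambda>x. integral {0..x} (w0 \<nu>))"
    by (rule indefinite_integral_continuous_1[OF rw_int_on[OF assms]])
  have "continuous_on {0..1} (\<lambda>x. integral {0..1} (w0 \<nu>) - integral {0..x} (w0 \<nu>))"
    by (intro continuous_intros c)
  moreover have "hh \<nu> x = integral {0..1} (w0 \<nu>) - integral {0..x} (w0 \<nu>)" if "x \<in> {0..1}" for x
    using hh_combine[OF assms, of 0 x] that unfolding hh_def by auto
  ultimately show ?thesis by (metis (no_types, lifting) continuous_on_cong)
qed

lemma hat_hh: "radial_weight \<nu> \<Longrightarrow> 0 \<le> r \<Longrightarrow> omega_hat \<nu> r = hh \<nu> r"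
  using rw_hat hh_def by metis

definition mom :: "(real \<Rightarrow> real) \<Rightarrow> real \<Rightarrow> real" where
  "mom \<nu> x = integral {0..1} (\<lambda>s. s powr x * w0 \<nu> s)"

lemma mom_si: assumes "radial_weight \<nu>" "0 \<le> x"
  shows "set_integrable lborel {0..1} (\<lambda>s. s powr x * w0 \<nu> s)"
proof (rule set_integrable_bound[where f="w0 \<nu>"])
  show "set_integrable lborel {0..1} (w0 \<nu>)"
    unfolding set_integrable_def using rw_integrable[OF assms(1)]
    by (intro integrable_mult_indicator) auto
  have [measurable]: "w0 \<nu> \<in> borel_measurable borel" by (rule rw_meas[OF assms(1)])
  show "set_borel_measurable lborel {0..1} (\<lambda>s. s powr x * w0 \<nu> s)"
    unfolding set_borel_measurable_def by measurable
  show "AE s in lborel. s \<in> {0..1} \<longrightarrow> norm (s powr x * w0 \<nu> s) \<le> norm (w0 \<nu> s)"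
  proof (intro AE_I2 impI)
    fix s :: real assume s: "s \<in> {0..1}"
    have "s powr x \<le> 1" using s assms(2) by (auto intro: powr_le1)
    moreover have "0 \<le> s powr x" by simp
    ultimately show "norm (s powr x * w0 \<nu> s) \<le> norm (w0 \<nu> s)"
      using rw_nonneg[OF assms(1)] by (simp add: abs_mult mult_left_le_one_le)
  qed
qed

lemma mom_int: "radial_weight \<nu> \<Longrightarrow> 0 \<le> x \<Longrightarrow> (\<lambda>s. s powr x * w0 \<nu> s) integrable_on {0..1}"
  using mom_si set_borel_integral_eq_integral(1) by blast

lemma moment_mom: assumes "radial_weight \<nu>" "0 \<le> x" shows "moment \<nu> x = mom \<nu> x"
proof -
  have "moment \<nu> x = (LBINT s:{0..1}. s powr x * w0 \<nu> s)"
    unfolding moment_def set_lebesgue_integral_def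
    by (rule Bochner_Integration.integral_cong) (auto simp: w0_def indicator_def)
  also have "\<dots> = mom \<nu> x" unfolding mom_def
    by (rule set_borel_integral_eq_integral(2)[OF mom_si[OF assms]])
  finally show ?thesis .
qed



lemma mom_lower:
  assumes rw: "radial_weight \<nu>" and C: "\<forall>r\<in>{0..<1}. hh \<nu> r \<le> C * hh \<nu> ((1+r)/2)"
    and x: "x \<ge> 1" and C1: "C \<ge> 1"
  shows "hh \<nu> (1 - 1/x) \<le> C * exp 1 * mom \<nu> x"
proof -
  define b where "b = 1 - 1/(2*x)"
  have b: "1/2 \<le> b" "b < 1" using x by (auto simp: b_def field_simps)
  have "(1 + (1 - 1/x))/2 = b" using x by (simp add: b_def field_simps)
  moreover have "1 - 1/x \<in> {0..<1}" using x by (auto simp: field_simps)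
  ultimately have h1: "hh \<nu> (1 - 1/x) \<le> C * hh \<nu> b"
    using C by metis
  have bx: "exp (-1) \<le> b powr x"
  proof -
    define u where "u = 1/(2*x)"
    have u: "0 \<le> u" "u \<le> 1/2" using x by (auto simp: u_def field_simps)
    have "- u - 2 * u\<^sup>2 \<le> ln (1 - u)" by (rule ln_one_minus_pos_lower_bound[OF u])
    then have "x * (- u - 2 * u\<^sup>2) \<le> x * ln b" using x by (simp add: b_def u_def)
    moreover have "x * (- u - 2 * u\<^sup>2) = -1/2 - 1/(2*x)" using x
      by (simp add: u_def power2_eq_square field_simps)
    moreover have "-1/2 - 1/(2*x) \<ge> -1" using x by (simp add: field_simps)
    ultimately have "-1 \<le> x * ln b" by linarith
    then have "exp (-1) \<le> exp (x * ln b)" by simp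
    also have "exp (x * ln b) = b powr x" using b by (simp add: powr_def mult.commute)
    finally show ?thesis .
  qed
  have hb: "hh \<nu> b = integral {b..1} (w0 \<nu>)" by (simp add: hh_def)
  have "b powr x * hh \<nu> b = integral {b..1} (\<lambda>s. b powr x * w0 \<nu> s)"
    by (simp add: hb)
  also have "\<dots> \<le> integral {b..1} (\<lambda>s. s powr x * w0 \<nu> s)"
  proof (rule integral_le)
    show "(\<lambda>s. b powr x * w0 \<nu> s) integrable_on {b..1}"
      by (intro integrable_on_mult_right rw_int_on rw)
    show "(\<lambda>s. s powr x * w0 \<nu> s) integrable_on {b..1}"
      by (rule integrable_on_subinterval[OF mom_int[OF rw]]) (use x b in auto)
    show "b powr x * w0 \<nu> s \<le> s powr x * w0 \<nu> s" if "s \<in> {b..1}" for s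
      using that b x by (intro mult_right_mono powr_mono2 rw_nonneg rw) auto
  qed
  also have "\<dots> \<le> mom \<nu> x" unfolding mom_def
  proof (rule integral_subset_le)
    show "(\<lambda>s. s powr x * w0 \<nu> s) integrable_on {b..1}"
      by (rule integrable_on_subinterval[OF mom_int[OF rw]]) (use x b in auto)
    show "(\<lambda>s. s powr x * w0 \<nu> s) integrable_on {0..1}"
      by (rule mom_int[OF rw]) (use x in auto)
  qed (use b rw_nonneg[OF rw] in auto)
  finally have "b powr x * hh \<nu> b \<le> mom \<nu> x" .
  moreover have "exp (-1) * hh \<nu> b \<le> b powr x * hh \<nu> b"
    using bx hh_nonneg[OF rw] by (intro mult_right_mono) auto
  ultimately have "exp (-1) * hh \<nu> b \<le> mom \<nu> x" by linarith
  then have "exp 1 * (exp (-1) * hh \<nu> b) \<le> exp 1 * mom \<nu> x" by simp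
  then have "hh \<nu> b \<le> exp 1 * mom \<nu> x"
    by (simp add: mult.assoc[symmetric] exp_add[symmetric])
  then have "C * hh \<nu> b \<le> C * (exp 1 * mom \<nu> x)"
    using C1 by (intro mult_left_mono) auto
  then show ?thesis using h1 by (simp add: mult.assoc)
qed



lemma mom_upper:
  assumes rw: "radial_weight \<nu>" and C: "\<forall>r\<in>{0..<1}. hh \<nu> r \<le> C * hh \<nu> ((1+r)/2)"
    and x: "x \<ge> 1" and C1: "C \<ge> 1"
  shows "mom \<nu> x \<le> (1 + (\<Sum>k. exp (-((2::real)^k)) * C^(k+1))) * hh \<nu> (1 - 1/x)"
proof -
  define m where "m j = max 0 (1 - 2^j/x)" for j :: nat
  have m01: "0 \<le> m j" "m j < 1" for j using x by (auto simp: m_def)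
  have m0: "m 0 = 1 - 1/x" using x by (simp add: m_def)
  have m_iter: "hh \<nu> (m j) \<le> C^j * hh \<nu> (m 0)" for j
  proof (induction j)
    case (Suc j)
    have le: "m j \<le> (1 + m (Suc j))/2"
    proof (cases "1 - 2^Suc j / x \<ge> 0")
      case True
      then have "m (Suc j) = 1 - 2 * 2^j/x" by (simp add: m_def)
      moreover have "m j = 1 - 2^j/x" using True x
        by (simp add: m_def)
      ultimately show ?thesis by (simp add: field_simps)
    next
      case False
      then have "m (Suc j) = 0" by (simp add: m_def)
      moreover have h2: "1 - 2^j/x \<le> 1/2" using False x by (simp add: field_simps)
      have h0: "(0::real) \<le> 1/2" by simp
      have "m j \<le> 1/2" unfolding m_def by (rule max.boundedI[OF h0 h2])
      ultimately show ?thesis by simp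
    qed
    have "hh \<nu> (m (Suc j)) \<le> C * hh \<nu> ((1 + m (Suc j))/2)"
      using C m01 by auto
    also have "\<dots> \<le> C * hh \<nu> (m j)"
      using le C1 m01[of "Suc j"] by (intro mult_left_mono hh_mono rw) auto
    also have "\<dots> \<le> C * (C^j * hh \<nu> (m 0))"
      using Suc C1 by (intro mult_left_mono) auto
    finally show ?case by (simp add: mult.assoc)
  qed simp
  obtain J :: nat where J: "x < 2^J" using real_arch_pow[of 2 x] by auto
  have mJ: "m J = 0" using J x by (simp add: m_def)
  define G where "G s = (if m 0 \<le> s then 1 else 0) + (\<Sum>k<J. exp (-((2::real)^k)) * (if m (Suc k) \<le> s then 1 else 0))" for s :: real
  have G_nonneg: "0 \<le> (\<Sum>k<J. exp (-((2::real)^k)) * (if m (Suc k) \<le> s then 1 else 0))" for s :: real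
    by (intro sum_nonneg) auto
  have pw: "s powr x \<le> G s" if s: "0 \<le> s" "s < 1" for s
  proof (cases "m 0 \<le> s")
    case True
    then have "1 \<le> G s" using G_nonneg[of s] by (simp add: G_def)
    moreover have "s powr x \<le> 1" using s x by (intro powr_le1) auto
    ultimately show ?thesis by linarith
  next
    case False
    define L where "L = (LEAST j. m j \<le> s)"
    have ex: "m J \<le> s" using mJ s by simp
    have L1: "m L \<le> s" unfolding L_def by (rule LeastI[of "\<lambda>j. m j \<le> s" J, OF ex])
    have L2: "L \<le> J" unfolding L_def by (rule Least_le[of "\<lambda>j. m j \<le> s" J, OF ex])
    have "L \<noteq> 0" using L1 False by (metis)
    then obtain k where k: "L = Suc k" using not0_implies_Suc by blast
    have kJ: "k < J" using L2 k by simp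
    have mk: "s < m k" using not_less_Least[of k "\<lambda>j. m j \<le> s"] k unfolding L_def by auto
    then have mk_eq: "m k = 1 - 2^k/x" using s by (simp add: m_def split: if_splits)
    have "s powr x \<le> m k powr x" using mk s x by (intro powr_mono2) auto
    also have "m k powr x = exp (x * ln (m k))" using mk s by (simp add: powr_def mult.commute)
    also have "\<dots> \<le> exp (-((2::real)^k))"
    proof -
      have "ln (m k) \<le> m k - 1" using mk s by (intro ln_le_minus_one) auto
      then have "x * ln (m k) \<le> x * (m k - 1)" using x by (intro mult_left_mono) auto
      also have "x * (m k - 1) = -(2^k)" using x mk_eq by (simp add: field_simps)
      finally show ?thesis by simp
    qed
    also have "exp (-((2::real)^k)) = exp (-((2::real)^k)) * (if m (Suc k) \<le> s then 1 else 0)"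
      using L1 k by simp
    also have "\<dots> \<le> (\<Sum>k<J. exp (-((2::real)^k)) * (if m (Suc k) \<le> s then 1 else 0))"
      by (rule member_le_sum[where f="\<lambda>k. exp (-((2::real)^k)) * (if m (Suc k) \<le> s then 1 else 0)"])
         (use kJ in auto)
    also have "\<dots> \<le> G s" by (simp add: G_def)
    finally show ?thesis .
  qed
  have fint: "(\<lambda>s. if m j \<le> s then w0 \<nu> s else 0) integrable_on {0..1}"
    and fval: "integral {0..1} (\<lambda>s. if m j \<le> s then w0 \<nu> s else 0) = hh \<nu> (m j)" for j
  proof -
    have eqs: "{m j..} \<inter> {0..1} = {m j..1}" using m01[of j] by auto
    have *: "(\<lambda>s. if m j \<le> s then w0 \<nu> s else 0) = (\<lambda>s. if s \<in> {m j..} then w0 \<nu> s else 0)"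
      by auto
    show "(\<lambda>s. if m j \<le> s then w0 \<nu> s else 0) integrable_on {0..1}"
      unfolding * integrable_restrict_Int eqs by (rule rw_int_on[OF rw])
    show "integral {0..1} (\<lambda>s. if m j \<le> s then w0 \<nu> s else 0) = hh \<nu> (m j)"
      unfolding * Henstock_Kurzweil_Integration.integral_restrict_Int eqs hh_def ..
  qed
  have Gw: "G s * w0 \<nu> s = (if m 0 \<le> s then w0 \<nu> s else 0) +
      (\<Sum>k<J. exp (-((2::real)^k)) * (if m (Suc k) \<le> s then w0 \<nu> s else 0))" for s
    by (simp add: G_def algebra_simps sum_distrib_right sum_distrib_left if_distrib cong: if_cong)
  have Gint: "(\<lambda>s. G s * w0 \<nu> s) integrable_on {0..1}"
    unfolding Gw by (intro integrable_add integrable_sum integrable_on_mult_right fint) auto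
  have Gval: "integral {0..1} (\<lambda>s. G s * w0 \<nu> s) =
      hh \<nu> (m 0) + (\<Sum>k<J. exp (-((2::real)^k)) * hh \<nu> (m (Suc k)))"
  proof -
    have "integral {0..1} (\<lambda>s. \<Sum>k<J. exp (-((2::real)^k)) * (if m (Suc k) \<le> s then w0 \<nu> s else 0))
       = (\<Sum>k<J. integral {0..1} (\<lambda>s. exp (-((2::real)^k)) * (if m (Suc k) \<le> s then w0 \<nu> s else 0)))"
      by (rule integral_sum) (auto intro: integrable_on_mult_right fint)
    also have "\<dots> = (\<Sum>k<J. exp (-((2::real)^k)) * hh \<nu> (m (Suc k)))"
      by (simp add: fval)
    finally have s: "integral {0..1} (\<lambda>s. \<Sum>k<J. exp (-((2::real)^k)) * (if m (Suc k) \<le> s then w0 \<nu> s else 0))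
       = (\<Sum>k<J. exp (-((2::real)^k)) * hh \<nu> (m (Suc k)))" .
    show ?thesis unfolding Gw
      by (subst integral_add) (auto intro!: integrable_sum integrable_on_mult_right fint
        simp: s fval)
  qed
  have "mom \<nu> x \<le> integral {0..1} (\<lambda>s. G s * w0 \<nu> s)"
    unfolding mom_def
  proof (rule integral_le[OF mom_int[OF rw] Gint])
    show "0 \<le> x" using x by simp
    fix s :: real assume s: "s \<in> {0..1}"
    show "s powr x * w0 \<nu> s \<le> G s * w0 \<nu> s"
    proof (cases "s = 1")
      case True then show ?thesis by (simp add: rw_w0_1)
    next
      case False then show ?thesis using s pw[of s] rw_nonneg[OF rw]
        by (intro mult_right_mono) auto
    qed
  qed
  also have "\<dots> = hh \<nu> (m 0) + (\<Sum>k<J. exp (-((2::real)^k)) * hh \<nu> (m (Suc k)))" by (rule Gval)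
  also have "(\<Sum>k<J. exp (-((2::real)^k)) * hh \<nu> (m (Suc k))) \<le> (\<Sum>k<J. exp (-((2::real)^k)) * C^(k+1)) * hh \<nu> (m 0)"
    unfolding sum_distrib_right
  proof (intro sum_mono)
    fix k assume "k \<in> {..<J}"
    have "hh \<nu> (m (Suc k)) \<le> C^(k+1) * hh \<nu> (m 0)" using m_iter[of "Suc k"] by simp
    then show "exp (-((2::real)^k)) * hh \<nu> (m (Suc k)) \<le> exp (-((2::real)^k)) * C^(k+1) * hh \<nu> (m 0)"
      by (simp add: mult.assoc)
  qed
  also have "(\<Sum>k<J. exp (-((2::real)^k)) * C^(k+1)) \<le> (\<Sum>k. exp (-((2::real)^k)) * C^(k+1))"
    by (intro sum_le_suminf summ_aux C1) (use C1 in auto)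
  then have "(\<Sum>k<J. exp (-((2::real)^k)) * C^(k+1)) * hh \<nu> (m 0) \<le> (\<Sum>k. exp (-((2::real)^k)) * C^(k+1)) * hh \<nu> (m 0)"
    by (intro mult_right_mono hh_nonneg rw)
  finally show ?thesis unfolding m0 by (simp add: algebra_simps)
qed



lemma nn_interval:
  assumes rw: "radial_weight \<nu>" and ab: "0 \<le> a" "a \<le> b" "b \<le> 1"
  shows "(\<integral>\<^sup>+ s. ennreal (indicator {a..<b} s * w0 \<nu> s) \<partial>lborel) = ennreal (hh \<nu> a - hh \<nu> b)"
proof -
  have "(\<integral>\<^sup>+ s. ennreal (indicator {a..<b} s * w0 \<nu> s) \<partial>lborel) =
        (\<integral>\<^sup>+ s. ennreal (indicator {a..b} s * w0 \<nu> s) \<partial>lborel)"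
    by (rule nn_integral_cong_AE) (use AE_lborel_singleton[of b] in \<open>eventually_elim, auto simp: indicator_def\<close>)
  also have "\<dots> = ennreal (hh \<nu> a - hh \<nu> b)"
  proof (rule nn_integral_has_integral_lebesgue)
    show "0 \<le> w0 \<nu> s" for s by (rule rw_nonneg[OF rw])
    have "(w0 \<nu> has_integral integral {a..b} (w0 \<nu>)) {a..b}"
      using rw_int_on[OF rw] by blast
    moreover have "integral {a..b} (w0 \<nu>) = hh \<nu> a - hh \<nu> b"
      using hh_combine[OF rw ab(2,3)] by simp
    ultimately show "(w0 \<nu> has_integral (hh \<nu> a - hh \<nu> b)) {a..b}" by simp
  qed
  finally show ?thesis .
qed

lemma level_interval:
  assumes rw: "radial_weight \<nu>" and pos: "\<forall>s\<in>{0..<1}. 0 < hh \<nu> s"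
    and r: "0 \<le> r" "r < 1" and t: "0 \<le> t" "t < hh \<nu> r"
  shows "\<exists>c. r < c \<and> c \<le> 1 \<and> hh \<nu> c = t \<and> {r..<1} \<inter> {s. t < hh \<nu> s} = {r..<c}"
proof -
  define S where "S = {s \<in> {r..1}. hh \<nu> s \<le> t}"
  have cont: "continuous_on {r..1} (hh \<nu>)"
    by (rule continuous_on_subset[OF hh_cont[OF rw]]) (use r in auto)
  have "closed S" unfolding S_def
    by (intro continuous_on_closed_Collect_le cont continuous_on_const) auto
  moreover have "1 \<in> S" using r t by (auto simp: S_def hh_one)
  moreover have "bdd_below S" by (auto simp: S_def bdd_below_def)
  ultimately have cS: "Inf S \<in> S" using closed_contains_Inf by blast
  define c where "c = Inf S"
  have c1: "r \<le> c" "c \<le> 1" "hh \<nu> c \<le> t" using cS by (auto simp: S_def c_def)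
  have cr: "r < c" using c1 t by (cases "r = c") auto
  obtain d where d: "r \<le> d" "d \<le> c" "hh \<nu> d = t"
    using IVT2'[of "hh \<nu>" c t r] c1 t cr continuous_on_subset[OF cont, of "{r..c}"] by auto
  have "d \<in> S" using d c1 by (auto simp: S_def)
  then have "c \<le> d" unfolding c_def by (intro cInf_lower) (auto simp: S_def bdd_below_def)
  then have hc: "hh \<nu> c = t" using d by auto
  have "{r..<1} \<inter> {s. t < hh \<nu> s} = {r..<c}"
  proof (intro equalityI subsetI)
    fix s assume s: "s \<in> {r..<1} \<inter> {s. t < hh \<nu> s}"
    have "s < c"
    proof (rule ccontr)
      assume "\<not> s < c"
      then have "hh \<nu> s \<le> hh \<nu> c" using s by (intro hh_mono rw) auto
      then show False using s hc by auto
    qed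
    then show "s \<in> {r..<c}" using s by auto
  next
    fix s assume s: "s \<in> {r..<c}"
    have "s \<notin> S"
    proof
      assume "s \<in> S"
      then have "c \<le> s" unfolding c_def by (intro cInf_lower) (auto simp: S_def bdd_below_def)
      then show False using s by auto
    qed
    then show "s \<in> {r..<1} \<inter> {s. t < hh \<nu> s}" using s c1 by (auto simp: S_def)
  qed
  then show ?thesis using cr c1 hc by blast
qed



lemma push:
  assumes rw: "radial_weight \<nu>" and pos: "\<forall>s\<in>{0..<1}. 0 < hh \<nu> s"
    and r: "0 \<le> r" "r < 1"
    and H: "H = (\<lambda>s. hh \<nu> (max 0 (min 1 s)))"
  shows "distr (density lborel (\<lambda>s. ennreal (indicator {r..<1} s * w0 \<nu> s))) borel H
       = density lborel (indicator {0..hh \<nu> r})"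
proof -
  define M where "M = density lborel (\<lambda>s. ennreal (indicator {r..<1} s * w0 \<nu> s))"
  define V where "V t = (if t < 0 then hh \<nu> r else if t < hh \<nu> r then hh \<nu> r - t else 0)" for t
  have hr: "0 < hh \<nu> r" using pos r by auto
  have Hc: "continuous_on UNIV H" unfolding H
    by (rule continuous_on_compose2[OF hh_cont[OF rw]]) (auto intro!: continuous_intros)
  have Hm[measurable]: "H \<in> borel_measurable borel" by (rule borel_measurable_continuous_onI[OF Hc])
  have [measurable]: "w0 \<nu> \<in> borel_measurable borel" by (rule rw_meas[OF rw])
  have HM: "H \<in> measurable M borel" unfolding M_def by measurable
  have HonI: "H s = hh \<nu> s" if "s \<in> {r..<1}" for s using that r unfolding H by auto
  have N: "emeasure (distr M borel H) {t<..} = ennreal (V t)" for t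
  proof -
    have "emeasure (distr M borel H) {t<..} = emeasure M (H -` {t<..} \<inter> space M)"
      by (rule emeasure_distr[OF HM]) simp
    also have "\<dots> = (\<integral>\<^sup>+ s. ennreal (indicator {r..<1} s * w0 \<nu> s) * indicator (H -` {t<..}) s \<partial>lborel)"
      unfolding M_def using measurable_sets[OF Hm, of "{t<..}"] by (subst emeasure_density) auto
    also have "\<dots> = (\<integral>\<^sup>+ s. ennreal (indicator ({r..<1} \<inter> {s. t < hh \<nu> s}) s * w0 \<nu> s) \<partial>lborel)"
      by (rule nn_integral_cong) (auto simp: indicator_def HonI)
    also have "\<dots> = ennreal (V t)"
    proof (cases "t < 0")
      case True
      then have "{r..<1} \<inter> {s. t < hh \<nu> s} = {r..<1}" using hh_nonneg[OF rw] by (auto intro: less_le_trans)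
      then show ?thesis using nn_interval[OF rw r(1), of 1] r True
        by (simp add: V_def hh_one)
    next
      case False
      show ?thesis
      proof (cases "t < hh \<nu> r")
        case True
        obtain c where c: "r < c" "c \<le> 1" "hh \<nu> c = t" "{r..<1} \<inter> {s. t < hh \<nu> s} = {r..<c}"
          using level_interval[OF rw pos r, of t] False True by auto
        then show ?thesis using nn_interval[OF rw r(1), of c] False True by (simp add: V_def)
      next
        case True2: False
        have "{r..<1} \<inter> {s. t < hh \<nu> s} = {}"
          using hh_mono[OF rw, of r] True2 by force
        then show ?thesis using False True2 by (simp add: V_def)
      qed
    qed
    finally show ?thesis .
  qed
  have L: "emeasure (density lborel (indicator {0..hh \<nu> r})) {t<..} = ennreal (V t)" for t
  proof -
    have "emeasure (density lborel (indicator {0..hh \<nu> r})) {t<..} =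
          (\<integral>\<^sup>+ x. indicator {0..hh \<nu> r} x * indicator {t<..} x \<partial>lborel)"
      by (subst emeasure_density) auto
    also have "\<dots> = (\<integral>\<^sup>+ x. indicator ({0..hh \<nu> r} \<inter> {t<..}) x \<partial>lborel)"
      by (simp add: indicator_inter_arith)
    also have "\<dots> = emeasure lborel ({0..hh \<nu> r} \<inter> {t<..})" by simp
    also have "\<dots> = ennreal (V t)"
    proof (cases "t < 0")
      case True
      then have "{0..hh \<nu> r} \<inter> {t<..} = {0..hh \<nu> r}" by auto
      then show ?thesis using True hr by (simp add: V_def)
    next
      case False
      show ?thesis
      proof (cases "t < hh \<nu> r")
        case True
        then have "{0..hh \<nu> r} \<inter> {t<..} = {t<..hh \<nu> r}" using False by auto
        then show ?thesis using False True by (simp add: V_def)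
      next
        case True2: False
        have "{0..hh \<nu> r} \<inter> {t<..} = {}" using True2 by auto
        then show ?thesis using False True2 by (simp add: V_def)
      qed
    qed
    finally show ?thesis .
  qed
  show ?thesis unfolding M_def[symmetric]
  proof (rule measure_eqI_lessThan)
    show "emeasure (distr M borel H) {x<..} < \<infinity>" for x using N by simp
    show "emeasure (distr M borel H) {x<..} = emeasure (density lborel (indicator {0..hh \<nu> r})) {x<..}" for x
      using N L by simp
  qed auto
qed



lemma mu_nn:
  assumes rw: "radial_weight \<nu>" and pos: "\<forall>s\<in>{0..<1}. 0 < hh \<nu> s"
    and r: "0 \<le> r" "r < 1" and a: "\<alpha> > 0"
    and H: "H = (\<lambda>s. hh \<nu> (max 0 (min 1 s)))"
  shows "(\<integral>\<^sup>+ s. ennreal (indicator {r..<1} s * (w0 \<nu> s * H s powr (\<alpha> - 1))) \<partial>lborel)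
         = ennreal (hh \<nu> r powr \<alpha> / \<alpha>)"
proof -
  define M where "M = density lborel (\<lambda>s. ennreal (indicator {r..<1} s * w0 \<nu> s))"
  have Hc: "continuous_on UNIV H" unfolding H
    by (rule continuous_on_compose2[OF hh_cont[OF rw]]) (auto intro!: continuous_intros)
  have Hm[measurable]: "H \<in> borel_measurable borel" by (rule borel_measurable_continuous_onI[OF Hc])
  have [measurable]: "w0 \<nu> \<in> borel_measurable borel" by (rule rw_meas[OF rw])
  have HM: "H \<in> measurable M borel" unfolding M_def by measurable
  have D: "distr M borel H = density lborel (indicator {0..hh \<nu> r})"
    unfolding M_def by (rule push[OF rw pos r H])
  have "(\<integral>\<^sup>+ t. ennreal (t powr (\<alpha> - 1)) \<partial>distr M borel H) = (\<integral>\<^sup>+ s. ennreal (H s powr (\<alpha> - 1)) \<partial>M)"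
    by (rule nn_integral_distr[OF HM]) simp
  also have "\<dots> = (\<integral>\<^sup>+ s. ennreal (indicator {r..<1} s * w0 \<nu> s) * ennreal (H s powr (\<alpha> - 1)) \<partial>lborel)"
    unfolding M_def by (rule nn_integral_density) auto
  also have "\<dots> = (\<integral>\<^sup>+ s. ennreal (indicator {r..<1} s * (w0 \<nu> s * H s powr (\<alpha> - 1))) \<partial>lborel)"
    by (rule nn_integral_cong) (simp add: ennreal_mult''[symmetric] mult.assoc)
  finally have l: "(\<integral>\<^sup>+ t. ennreal (t powr (\<alpha> - 1)) \<partial>distr M borel H) =
     (\<integral>\<^sup>+ s. ennreal (indicator {r..<1} s * (w0 \<nu> s * H s powr (\<alpha> - 1))) \<partial>lborel)" .
  have "(\<integral>\<^sup>+ t. ennreal (t powr (\<alpha> - 1)) \<partial>density lborel (indicator {0..hh \<nu> r}))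
      = (\<integral>\<^sup>+ t. indicator {0..hh \<nu> r} t * ennreal (t powr (\<alpha> - 1)) \<partial>lborel)"
    by (rule nn_integral_density) auto
  also have "\<dots> = (\<integral>\<^sup>+ t. ennreal (indicator {0..hh \<nu> r} t * t powr (\<alpha> - 1)) \<partial>lborel)"
    by (rule nn_integral_cong) (auto simp: indicator_def)
  also have "\<dots> = ennreal (hh \<nu> r powr \<alpha> / \<alpha>)"
  proof (rule nn_integral_has_integral_lebesgue)
    show "0 \<le> t powr (\<alpha> - 1)" for t by simp
    have "((\<lambda>t. t powr (\<alpha> - 1)) has_integral (hh \<nu> r powr (\<alpha> - 1 + 1) / (\<alpha> - 1 + 1))) {0..hh \<nu> r}"
      by (rule has_integral_powr_from_0) (use a hh_nonneg[OF rw] in auto)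
    then show "((\<lambda>t. t powr (\<alpha> - 1)) has_integral (hh \<nu> r powr \<alpha> / \<alpha>)) {0..hh \<nu> r}" by simp
  qed
  finally show ?thesis using l D by simp
qed

lemma mom_bounds:
  assumes rw: "radial_weight \<nu>" and C0: "C0 > 0" and C: "\<forall>r\<in>{0..<1}. hh \<nu> r \<le> C0 * hh \<nu> ((1+r)/2)"
  shows "\<exists>K>0. \<forall>x\<ge>1. mom \<nu> x \<le> K * hh \<nu> (1 - 1/x) \<and> hh \<nu> (1 - 1/x) \<le> K * mom \<nu> x"
proof -
  define C' where "C' = max C0 1"
  have C1: "C' \<ge> 1" by (simp add: C'_def)
  have C': "\<forall>r\<in>{0..<1}. hh \<nu> r \<le> C' * hh \<nu> ((1+r)/2)"
  proof
    fix r :: real assume "r \<in> {0..<1}"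
    then have "hh \<nu> r \<le> C0 * hh \<nu> ((1+r)/2)" using C by auto
    also have "\<dots> \<le> C' * hh \<nu> ((1+r)/2)"
      by (intro mult_right_mono hh_nonneg rw) (simp add: C'_def)
    finally show "hh \<nu> r \<le> C' * hh \<nu> ((1+r)/2)" .
  qed
  define S where "S = (\<Sum>k. exp (-((2::real)^k)) * C'^(k+1))"
  have S0: "0 \<le> S" unfolding S_def using C1 by (intro suminf_nonneg summ_aux) auto
  define K where "K = max (C' * exp 1) (1 + S)"
  have "K > 0" using S0 by (simp add: K_def max_def)
  moreover have "mom \<nu> x \<le> K * hh \<nu> (1 - 1/x) \<and> hh \<nu> (1 - 1/x) \<le> K * mom \<nu> x" if x: "x \<ge> 1" for x
  proof
    have "mom \<nu> x \<le> (1 + S) * hh \<nu> (1 - 1/x)" unfolding S_def by (rule mom_upper[OF rw C' x C1])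
    also have "\<dots> \<le> K * hh \<nu> (1 - 1/x)" by (intro mult_right_mono hh_nonneg rw) (simp add: K_def)
    finally show "mom \<nu> x \<le> K * hh \<nu> (1 - 1/x)" .
    have hl: "hh \<nu> (1 - 1/x) \<le> C' * exp 1 * mom \<nu> x" by (rule mom_lower[OF rw C' x C1])
    have "0 \<le> mom \<nu> x"
      unfolding mom_def using x by (intro integral_nonneg mom_int rw) (auto intro!: mult_nonneg_nonneg rw_nonneg rw)
    then have "C' * exp 1 * mom \<nu> x \<le> K * mom \<nu> x" by (intro mult_right_mono) (auto simp: K_def)
    then show "hh \<nu> (1 - 1/x) \<le> K * mom \<nu> x" using hl by linarith
  qed
  ultimately show ?thesis by blast
qed



theorem lemma2p1:
  fixes \<omega> :: "real \<Rightarrow> real" and \<alpha> :: real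
  assumes "D_hat \<omega>" and "\<alpha> > 0"
  defines "\<mu> \<equiv> (\<lambda>r. \<omega> r * omega_hat \<omega> r powr (\<alpha> - 1))"
  shows "D_hat \<mu> \<and>
    (\<exists>C>0. \<forall>x\<ge>1. moment \<mu> x \<le> C * moment \<omega> x powr \<alpha> \<and>
                    moment \<omega> x powr \<alpha> \<le> C * moment \<mu> x)"
proof -
  have rw: "radial_weight \<omega>" using assms(1) by (simp add: D_hat_def)
  obtain C0 where C0: "C0 > 0" "\<forall>r\<in>{0..<1}. omega_hat \<omega> r \<le> C0 * omega_hat \<omega> ((1 + r) / 2)"
    using assms(1) by (auto simp: D_hat_def)
  have a: "\<alpha> > 0" by (rule assms(2))
  have Ch: "\<forall>r\<in>{0..<1}. hh \<omega> r \<le> C0 * hh \<omega> ((1 + r) / 2)"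
    using C0(2) by (auto simp: hat_hh[OF rw])
  have pos: "\<forall>s\<in>{0..<1}. 0 < hh \<omega> s"
    using rw by (auto simp: radial_weight_def hat_hh[OF rw])
  define H where "H = (\<lambda>s. hh \<omega> (max 0 (min 1 s)))"
  have Hc: "continuous_on UNIV H" unfolding H_def
    by (rule continuous_on_compose2[OF hh_cont[OF rw]]) (auto intro!: continuous_intros)
  have Hm[measurable]: "H \<in> borel_measurable borel" by (rule borel_measurable_continuous_onI[OF Hc])
  have [measurable]: "w0 \<omega> \<in> borel_measurable borel" by (rule rw_meas[OF rw])
  define F where "F r s = indicator {r..<1} s * (w0 \<omega> s * H s powr (\<alpha> - 1))" for r s
  have Fm[measurable]: "F r \<in> borel_measurable lborel" for r unfolding F_def by measurable
  have F0: "0 \<le> F r s" for r s unfolding F_def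
    by (auto intro!: mult_nonneg_nonneg rw_nonneg rw)
  have Feq: "indicator {r..<1} s *\<^sub>R \<mu> s = F r s" if "0 \<le> r" for r s
    using that by (auto simp: F_def \<mu>_def indicator_def w0_def H_def hat_hh[OF rw])
  have Fnn: "(\<integral>\<^sup>+ s. ennreal (F r s) \<partial>lborel) = ennreal (hh \<omega> r powr \<alpha> / \<alpha>)"
    if "0 \<le> r" "r < 1" for r
    unfolding F_def by (rule mu_nn[OF rw pos that a H_def])
  have muhat: "omega_hat \<mu> r = hh \<omega> r powr \<alpha> / \<alpha>" if "0 \<le> r" "r < 1" for r
  proof -
    have "omega_hat \<mu> r = integral\<^sup>L lborel (F r)"
      unfolding omega_hat_def set_lebesgue_integral_def using Feq[OF that(1)] by simp
    also have "\<dots> = enn2real (\<integral>\<^sup>+ s. ennreal (F r s) \<partial>lborel)"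
      by (rule integral_eq_nn_integral) (auto simp: F0)
    also have "\<dots> = hh \<omega> r powr \<alpha> / \<alpha>" using Fnn[OF that] a by simp
    finally show ?thesis .
  qed
  have rwmu: "radial_weight \<mu>"
    unfolding radial_weight_def
  proof (intro conjI ballI)
    show "0 \<le> \<mu> r" if "r \<in> {0..<1}" for r
      using rw that by (auto simp: \<mu>_def radial_weight_def)
    show "set_integrable lborel {0..<1} \<mu>"
      unfolding set_integrable_def
    proof -
      have e: "(\<lambda>s. indicator {0..<1} s *\<^sub>R \<mu> s) = F 0" using Feq[of 0] by auto
      show "integrable lborel (\<lambda>s. indicator {0..<1} s *\<^sub>R \<mu> s)" unfolding e
    proof (rule integrableI_nonneg)
      show "F 0 \<in> borel_measurable lborel" by simp
      show "AE x in lborel. 0 \<le> F 0 x" by (simp add: F0)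
      show "(\<integral>\<^sup>+ x. ennreal (F 0 x) \<partial>lborel) < \<infinity>" using Fnn[of 0] by simp
    qed
    qed
    show "0 < omega_hat \<mu> r" if "r \<in> {0..<1}" for r
    proof -
      have "0 < hh \<omega> r" using that pos by auto
      then show ?thesis using that a by (simp add: muhat)
    qed
  qed
  have Cmu: "\<forall>r\<in>{0..<1}. omega_hat \<mu> r \<le> C0 powr \<alpha> * omega_hat \<mu> ((1 + r) / 2)"
  proof
    fix r :: real assume r: "r \<in> {0..<1}"
    have r2: "0 \<le> (1 + r) / 2" "(1 + r) / 2 < 1" using r by auto
    have "hh \<omega> r powr \<alpha> \<le> (C0 * hh \<omega> ((1 + r) / 2)) powr \<alpha>"
      using Ch r a hh_nonneg[OF rw] by (intro powr_mono2) auto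
    also have "\<dots> = C0 powr \<alpha> * hh \<omega> ((1 + r) / 2) powr \<alpha>"
      using C0(1) hh_nonneg[OF rw] by (simp add: powr_mult)
    finally have "hh \<omega> r powr \<alpha> / \<alpha> \<le> C0 powr \<alpha> * (hh \<omega> ((1 + r) / 2) powr \<alpha> / \<alpha>)"
      using a by (simp add: divide_right_mono)
    then show "omega_hat \<mu> r \<le> C0 powr \<alpha> * omega_hat \<mu> ((1 + r) / 2)"
      using r r2 by (simp add: muhat)
  qed
  have Dmu: "D_hat \<mu>" unfolding D_hat_def
    using rwmu Cmu C0(1) by (intro conjI exI[of _ "C0 powr \<alpha>"]) auto
  obtain K1 where K1: "K1 > 0" "\<forall>x\<ge>1. mom \<omega> x \<le> K1 * hh \<omega> (1 - 1/x) \<and> hh \<omega> (1 - 1/x) \<le> K1 * mom \<omega> x"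
    using mom_bounds[OF rw C0(1) Ch] by blast
  have Chmu: "\<forall>r\<in>{0..<1}. hh \<mu> r \<le> C0 powr \<alpha> * hh \<mu> ((1 + r) / 2)"
    using Cmu by (auto simp: hat_hh[OF rwmu])
  obtain K2 where K2: "K2 > 0" "\<forall>x\<ge>1. mom \<mu> x \<le> K2 * hh \<mu> (1 - 1/x) \<and> hh \<mu> (1 - 1/x) \<le> K2 * mom \<mu> x"
    using mom_bounds[OF rwmu _ Chmu] C0(1) by auto
  define C where "C = max (K2 / \<alpha> * K1 powr \<alpha>) (K1 powr \<alpha> * \<alpha> * K2)"
  have Cpos: "C > 0" using K1 K2 a by (simp add: C_def max_def)
  have "moment \<mu> x \<le> C * moment \<omega> x powr \<alpha> \<and> moment \<omega> x powr \<alpha> \<le> C * moment \<mu> x"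
    if x: "x \<ge> 1" for x
  proof -
    define A where "A = hh \<omega> (1 - 1/x)"
    have Ar: "0 \<le> 1 - 1/x" "1 - 1/x < 1" using x by (auto simp: field_simps)
    have A0: "0 < A" unfolding A_def using pos Ar by auto
    have m1: "moment \<omega> x = mom \<omega> x" using x by (intro moment_mom rw) auto
    have m2: "moment \<mu> x = mom \<mu> x" using x by (intro moment_mom rwmu) auto
    have hm: "hh \<mu> (1 - 1/x) = A powr \<alpha> / \<alpha>"
      using muhat[OF Ar] hat_hh[OF rwmu Ar(1)] by (simp add: A_def)
    have b1: "mom \<omega> x \<le> K1 * A" "A \<le> K1 * mom \<omega> x" using K1 x by (auto simp: A_def)
    have b2: "mom \<mu> x \<le> K2 * (A powr \<alpha> / \<alpha>)" "A powr \<alpha> / \<alpha> \<le> K2 * mom \<mu> x"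
      using K2 x hm by auto
    have "0 < K1 * mom \<omega> x" using b1 A0 by linarith
    then have mpos: "0 \<le> mom \<omega> x" using K1 by (simp add: zero_less_mult_iff)
    show ?thesis
    proof
      have s1: "mom \<mu> x \<le> K2 / \<alpha> * A powr \<alpha>" using b2 by simp
      have s2: "A powr \<alpha> \<le> (K1 * mom \<omega> x) powr \<alpha>"
        using b1 A0 a by (intro powr_mono2) auto
      have s3: "(K1 * mom \<omega> x) powr \<alpha> = K1 powr \<alpha> * mom \<omega> x powr \<alpha>" using K1 mpos by (simp add: powr_mult)
      have "K2 / \<alpha> * A powr \<alpha> \<le> K2 / \<alpha> * (K1 powr \<alpha> * mom \<omega> x powr \<alpha>)"
        using s2 s3 K2 a by (intro mult_left_mono) auto
      then have "mom \<mu> x \<le> K2 / \<alpha> * K1 powr \<alpha> * mom \<omega> x powr \<alpha>"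
        using s1 by (simp add: mult.assoc)
      also have "\<dots> \<le> C * mom \<omega> x powr \<alpha>"
        by (intro mult_right_mono) (auto simp: C_def)
      finally show "moment \<mu> x \<le> C * moment \<omega> x powr \<alpha>" using m1 m2 by simp
    next
      have mmu: "0 \<le> mom \<mu> x"
      proof -
        have "0 < A powr \<alpha> / \<alpha>" using A0 a by simp
        then have "0 < K2 * mom \<mu> x" using b2 by linarith
        then show "0 \<le> mom \<mu> x" using K2 by (simp add: zero_less_mult_iff)
      qed
      have t1: "mom \<omega> x powr \<alpha> \<le> (K1 * A) powr \<alpha>" using b1 mpos a by (intro powr_mono2) auto
      have t2: "(K1 * A) powr \<alpha> = K1 powr \<alpha> * A powr \<alpha>" using K1 A0 by (simp add: powr_mult)
      have t3: "A powr \<alpha> \<le> \<alpha> * (K2 * mom \<mu> x)" using b2 a by (simp add: field_simps)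
      have "K1 powr \<alpha> * A powr \<alpha> \<le> K1 powr \<alpha> * (\<alpha> * (K2 * mom \<mu> x))"
        using t3 by (intro mult_left_mono) auto
      then have "mom \<omega> x powr \<alpha> \<le> (K1 powr \<alpha> * \<alpha> * K2) * mom \<mu> x"
        using t1 t2 by (simp add: mult.assoc)
      also have "\<dots> \<le> C * mom \<mu> x"
        using mmu by (intro mult_right_mono) (auto simp: C_def)
      finally show "moment \<omega> x powr \<alpha> \<le> C * moment \<mu> x" using m1 m2 by simp
    qed
  qed
  then show ?thesis using Dmu Cpos by blast
qed


end
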